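(* For every integer $n>1$, $$E_n=\sum_{N=1}^{\lfloor n/2\rfloor}(-1)^N\sum_{\substack{1\le q_1,\dots,q_{2N-1}\le\lfloor n/2\rfloor\\ (2q_1-1)+\cdots+(2q_{2N-1}-1)=n-1}}\frac{(n-1)!}{(2q_1-1)!\cdots(2q_{2N-1}-1)!}.$$
   Context: The Euler numbers $E_n$ are defined by $\sum_{n\ge0}E_nz^n/n!=1/\cosh z$ (so $E_n=0$ for odd $n$). The inner sum is over ordered $(2N-1)$-tuples. *)

theory Defs
  imports "HOL-Computational_Algebra.Formal_Power_Series"
begin

definition fps_cosh :: "real fps" where
  "fps_cosh = (fps_exp 1 + fps_exp (-1)) / 2"

definition euler_number :: "nat \<Rightarrow> real" where
  "euler_number n = fact n * fps_nth (inverse fps_cosh) n"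

end

theory Submission
  imports Defs
begin
unbundle fps_syntax

definition fps_sinh :: "real fps" where
  "fps_sinh = fps_const (1/2) * (fps_exp 1 - fps_exp (-1))"

lemma cosh_eq: "fps_cosh = fps_const (1/2) * (fps_exp 1 + fps_exp (-1))"
  unfolding fps_cosh_def
  by (simp add: fps_divide_unit inverse_fps_numeral mult.commute)

lemma cosh_0: "fps_cosh $ 0 = 1"
  by (simp add: cosh_eq)

lemma deriv_cosh: "fps_deriv fps_cosh = fps_sinh"
  by (simp add: cosh_eq fps_sinh_def fps_const_neg[symmetric] algebra_simps del: fps_const_neg)

lemma cosh_sq: "fps_cosh ^ 2 = 1 + fps_sinh ^ 2"
proof -
  have e: "fps_exp (1::real) * fps_exp (-1) = 1"
    by (metis fps_exp_add_mult fps_exp_0 add.right_inverse)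
  have h: "fps_const (1/2::real) ^ 2 * 4 = 1"
  proof -
    have "fps_const (1/2::real) ^ 2 * 4 = fps_const ((1/2)^2 * 4)"
      by (simp only: fps_const_power numeral_fps_const fps_const_mult)
    also have "(1/2::real)^2*4 = 1" by (simp add: power2_eq_square)
    finally show ?thesis by (simp only: fps_const_1_eq_1)
  qed
  have "fps_cosh ^ 2 - fps_sinh ^ 2 = fps_const (1/2::real) ^ 2 * 4 * (fps_exp 1 * fps_exp (-1))"
    unfolding cosh_eq fps_sinh_def by (simp add: power2_eq_square algebra_simps)
  then show ?thesis using e h by (simp add: algebra_simps)
qed

lemma sinh_nth: "fps_sinh $ i = (if odd i then 1 / fact i else 0)"
  by (auto simp: fps_sinh_def power_minus' field_simps)

lemma pow_agree:
  assumes "\<forall>i\<le>M. f$i = g$i"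
  shows "i \<le> M \<Longrightarrow> (f^k)$i = (g^k)$i"
proof (induction k arbitrary: i)
  case 0 then show ?case by simp
next
  case (Suc k)
  have "(f^Suc k)$i = (\<Sum>j=0..i. f$j * (f^k)$(i-j))" by (simp add: fps_mult_nth)
  also have "\<dots> = (\<Sum>j=0..i. g$j * (g^k)$(i-j))"
    using Suc assms by (intro sum.cong) auto
  also have "\<dots> = (g^Suc k)$i" by (simp add: fps_mult_nth)
  finally show ?case .
qed

definition sinhT :: "nat \<Rightarrow> real fps" where
  "sinhT B = (\<Sum>a\<in>{1..B}. fps_const (1/fact(2*a-1)) * fps_X^(2*a-1))"

lemma sinhT_nth: assumes "i \<le> 2*B" shows "sinhT B $ i = fps_sinh $ i"
proof -
  have "sinhT B $ i = (\<Sum>a\<in>{1..B}. if i = 2*a-1 then 1/fact(2*a-1) else 0)"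
    unfolding sinhT_def fps_sum_nth by (intro sum.cong refl) auto
  also have "\<dots> = fps_sinh $ i"
  proof (cases "odd i")
    case True
    then obtain j where j: "i = 2*j+1" by (auto elim: oddE)
    have "(\<Sum>a\<in>{1..B}. if i = 2*a-1 then 1/fact(2*a-1) else 0)
        = (\<Sum>a\<in>{1..B}. if a = j+1 then 1/fact i else (0::real))"
      by (intro sum.cong refl) (auto simp: j)
    also have "\<dots> = 1/fact i" using assms j by (subst sum.delta) auto
    finally show ?thesis using True by (simp add: sinh_nth)
  next
    case False
    have "(\<Sum>a\<in>{1..B}. if i = 2*a-1 then 1/fact(2*a-1) else 0) = (\<Sum>a\<in>{1..B}. (0::real))"
      using False by (intro sum.cong refl) auto
    then show ?thesis using False by (simp add: sinh_nth)
  qed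
  finally show ?thesis .
qed

lemma fps_const_prod': "(\<Prod>i\<in>A. fps_const (f i)) = fps_const (\<Prod>i\<in>A. f i)"
  by (induction A rule: infinite_finite_induct) auto

lemma sinhT_pow:
  "(sinhT B ^ k) $ m = (\<Sum>q \<in> {q \<in> {0..<k} \<rightarrow>\<^sub>E {1..B}. (\<Sum>i<k. 2 * q i - 1) = m}.
          (\<Prod>i<k. 1 / fact (2 * q i - 1)))"
proof -
  have "sinhT B ^ k = (\<Prod>i\<in>{0..<k}. sinhT B)" by simp
  also have "\<dots> = (\<Sum>q\<in>{0..<k} \<rightarrow>\<^sub>E {1..B}. \<Prod>i\<in>{0..<k}. fps_const (1/fact(2*q i-1)) * fps_X^(2*q i-1))"
    unfolding sinhT_def by (rule prod_sum_PiE) auto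
  also have "\<dots> = (\<Sum>q\<in>{0..<k} \<rightarrow>\<^sub>E {1..B}. fps_const (\<Prod>i<k. 1/fact(2*q i-1)) * fps_X^(\<Sum>i<k. 2*q i-1))"
    by (intro sum.cong refl) (simp only: prod.distrib fps_const_prod' power_sum atLeast0LessThan)
  finally have "(sinhT B ^ k) $ m = (\<Sum>q\<in>{0..<k} \<rightarrow>\<^sub>E {1..B}. if (\<Sum>i<k. 2*q i-1) = m then (\<Prod>i<k. 1/fact(2*q i-1)) else 0)"
    by (simp only: fps_sum_nth fps_mult_left_const_nth fps_X_power_nth) (intro sum.cong refl; simp)
  also have "\<dots> = (\<Sum>q \<in> {q \<in> {0..<k} \<rightarrow>\<^sub>E {1..B}. (\<Sum>i<k. 2 * q i - 1) = m}.
          (\<Prod>i<k. 1 / fact (2 * q i - 1)))"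
    by (rule sum.inter_filter[symmetric]) (auto intro: finite_PiE)
  finally show ?thesis .
qed

lemma sinh_pow:
  assumes "m \<le> 2*B"
  shows "(fps_sinh ^ k) $ m = (\<Sum>q \<in> {q \<in> {0..<k} \<rightarrow>\<^sub>E {1..B}. (\<Sum>i<k. 2 * q i - 1) = m}.
          (\<Prod>i<k. 1 / fact (2 * q i - 1)))"
proof -
  have "(fps_sinh ^ k) $ m = (sinhT B ^ k) $ m"
    using assms by (intro pow_agree[of "2*B"]) (auto simp: sinhT_nth)
  then show ?thesis by (simp add: sinhT_pow)
qed

lemma geom:
  fixes S G :: "real fps"
  assumes "(1 + S^2) * G = 1"
  shows "G = (\<Sum>k<K. fps_const ((-1)^k) * S^(2*k)) + fps_const ((-1)^K) * S^(2*K) * G"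
proof (induction K)
  case 0 then show ?case by simp
next
  case (Suc K)
  have G: "G = 1 - S^2 * G" using assms by (simp add: algebra_simps)
  have "fps_const ((-1)^K) * S^(2*K) * G = fps_const ((-1)^K) * S^(2*K) * (1 - S^2 * G)"
    using G by simp
  also have "\<dots> = fps_const ((-1)^K) * S^(2*K) + fps_const ((-1)^Suc K) * S^(2*Suc K) * G"
    by (simp add: algebra_simps power_add power2_eq_square fps_const_neg[symmetric] del: fps_const_neg)
  finally show ?case using Suc by (simp add: add.assoc)
qed

lemma fps_nth_power_mult_zero:
  fixes S G :: "real fps"
  assumes "S $ 0 = 0" "m < j"
  shows "(S^j * G) $ m = 0"
  using assms startsby_zero_power_prefix[of S j] by (simp add: fps_mult_nth)

theorem proposition1:
  fixes n :: nat
  assumes "n > 1"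
  shows "euler_number n =
    (\<Sum>N = 1..n div 2. (-1) ^ N *
       (\<Sum>q \<in> {q \<in> {0..<2*N-1} \<rightarrow>\<^sub>E {1..n div 2}.
                   (\<Sum>i<2*N-1. 2 * q i - 1) = n - 1}.
          fact (n - 1) / (\<Prod>i<2*N-1. fact (2 * q i - 1))))"
proof -
  define S where "S = fps_sinh"
  define G where "G = inverse (1 + S^2)"
  define K where "K = n div 2"
  define m where "m = n - 1"
  have nm: "n = Suc m" using assms by (simp add: m_def)
  have mK: "m \<le> 2*K" using assms by (simp add: m_def K_def)
  have S0: "S $ 0 = 0" by (simp add: S_def sinh_nth)
  have nz: "(1 + S^2) $ 0 \<noteq> 0" by (simp add: S0 power2_eq_square)
  have G1: "(1 + S^2) * G = 1" unfolding G_def using nz by (rule inverse_mult_eq_1')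
  have dE: "fps_deriv (inverse fps_cosh) = - (S * G)"
    using fps_inverse_deriv[of fps_cosh] cosh_0 deriv_cosh cosh_sq
    by (simp add: G_def S_def fps_inverse_power[symmetric])
  have en: "euler_number n = fact m * (fps_deriv (inverse fps_cosh)) $ m"
    by (simp add: euler_number_def nm)
  have SG: "S * G = (\<Sum>k<K. fps_const ((-1)^k) * S^(2*k+1)) + fps_const ((-1)^K) * (S^(2*K+1) * G)"
  proof -
    have "S * G = S * ((\<Sum>k<K. fps_const ((-1)^k) * S^(2*k)) + fps_const ((-1)^K) * S^(2*K) * G)"
      using geom[OF G1, of K] by simp
    also have "\<dots> = (\<Sum>k<K. fps_const ((-1)^k) * S^(2*k+1)) + fps_const ((-1)^K) * (S^(2*K+1) * G)"
      by (simp add: algebra_simps sum_distrib_left)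
    finally show ?thesis .
  qed
  have "(S * G) $ m = (\<Sum>k<K. (-1)^k * (S^(2*k+1)) $ m)"
    using SG fps_nth_power_mult_zero[OF S0, of m "2*K+1" G] mK by (simp add: fps_sum_nth)
  then have "(fps_deriv (inverse fps_cosh)) $ m = (\<Sum>k<K. (-1)^(Suc k) * (S^(2*Suc k - 1)) $ m)"
    using dE by (simp add: sum_negf)
  also have "\<dots> = (\<Sum>N=1..K. (-1)^N * (S^(2*N-1)) $ m)"
    by (simp add: sum.atLeast1_atMost_eq)
  finally have "euler_number n = fact m * (\<Sum>N=1..K. (-1)^N *
       (\<Sum>q \<in> {q \<in> {0..<2*N-1} \<rightarrow>\<^sub>E {1..K}. (\<Sum>i<2*N-1. 2 * q i - 1) = m}.
          (\<Prod>i<2*N-1. 1 / fact (2 * q i - 1))))"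
    using en sinh_pow[OF mK] by (simp add: S_def)
  also have "\<dots> = (\<Sum>N=1..K. (-1)^N *
       (\<Sum>q \<in> {q \<in> {0..<2*N-1} \<rightarrow>\<^sub>E {1..K}. (\<Sum>i<2*N-1. 2 * q i - 1) = m}.
          fact m / (\<Prod>i<2*N-1. fact (2 * q i - 1))))"
    by (simp add: sum_distrib_left prod_dividef algebra_simps)
  finally show ?thesis by (simp add: K_def m_def)
qed

end
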